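(* Let $P=\sum_{k\in\mathbb{Z}}\alpha_kx^k+\sum_{k\in\mathbb{Z}}\beta_k\,yx^k$ (finitely many nonzero terms) with all $\alpha_k,\beta_k\in\mathbb{R}$, and suppose $P$ is reciprocal as an element of $\mathbb{R}[\mathbb{Z}\times\mathbb{Z}/2\mathbb{Z}]$, where $\mathbb{Z}\times\mathbb{Z}/2\mathbb{Z}=\langle x,y\mid y^2,[x,y]\rangle$. Regard $P$ also as an element of $\mathbb{C}[D_\infty]$, where $D_\infty=\langle x,y\mid y^2,yxyx\rangle$ (same coefficients, same words). Let $k=\sum_k(|\alpha_k|+|\beta_k|)$ and $|\lambda|<1/k$. Then \[ m_{\mathbb{Z}\times\mathbb{Z}/2\mathbb{Z}}(P,\lambda)=m_{D_\infty}(P,\lambda). \]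
   Context: For a group $\Gamma$ and $Q=\sum_{g\in\Gamma}c_g g\in\mathbb{C}\Gamma$ (finite sum), the reciprocal is $Q^*=\sum_g\overline{c_g}\,g^{-1}$, and $Q$ is reciprocal if $Q=Q^*$. For reciprocal $P\in\mathbb{C}\Gamma$ with $l_1$-norm $k=\sum_g|c_g|$ and $|\lambda|<1/k$, define $m_\Gamma(P,\lambda)=-\sum_{n\ge1}a_n\lambda^n/n$, where $a_n$ is the coefficient of the identity element of $\Gamma$ in $P^n$. In the paper $D_\infty$ is written $\langle\rho,\sigma\mid\sigma^2,\sigma\rho\sigma\rho\rangle$ with $x=\rho$, $y=\sigma$. *)

theory Defs
  imports Complex_Main
begin

text \<open>Finitely supported elements of a group ring C[G] are functions G => complex
  with finite support. The group is given by its multiplication, identity and inverse.\<close>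

definition gr_mult :: "('g \<Rightarrow> 'g \<Rightarrow> 'g) \<Rightarrow> ('g \<Rightarrow> complex) \<Rightarrow> ('g \<Rightarrow> complex) \<Rightarrow> 'g \<Rightarrow> complex" where
  "gr_mult mul f h z = (\<Sum>(u,v)\<in>{(u,v). f u \<noteq> 0 \<and> h v \<noteq> 0 \<and> mul u v = z}. f u * h v)"

definition gr_unit :: "'g \<Rightarrow> 'g \<Rightarrow> complex" where
  "gr_unit e g = (if g = e then 1 else 0)"

fun gr_pow :: "('g \<Rightarrow> 'g \<Rightarrow> 'g) \<Rightarrow> 'g \<Rightarrow> ('g \<Rightarrow> complex) \<Rightarrow> nat \<Rightarrow> 'g \<Rightarrow> complex" where
  "gr_pow mul e f 0 = gr_unit e"
| "gr_pow mul e f (Suc n) = gr_mult mul (gr_pow mul e f n) f"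

definition reciprocal :: "('g \<Rightarrow> 'g) \<Rightarrow> ('g \<Rightarrow> complex) \<Rightarrow> bool" where
  "reciprocal ginv f \<longleftrightarrow> (\<forall>g. f (ginv g) = cnj (f g))"

definition l1_norm :: "('g \<Rightarrow> complex) \<Rightarrow> real" where
  "l1_norm f = (\<Sum>g\<in>{g. f g \<noteq> 0}. norm (f g))"

definition mG :: "('g \<Rightarrow> 'g \<Rightarrow> 'g) \<Rightarrow> 'g \<Rightarrow> ('g \<Rightarrow> complex) \<Rightarrow> complex \<Rightarrow> complex" where
  "mG mul e f lam = - (\<Sum>n. gr_pow mul e f (Suc n) e * lam ^ Suc n / of_nat (Suc n))"

text \<open>Elements are encoded as (k, b) meaning y^b x^k (b = True means a factor y).\<close>

definition zz2_mul :: "int \<times> bool \<Rightarrow> int \<times> bool \<Rightarrow> int \<times> bool" where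
  "zz2_mul p q = (fst p + fst q, snd p \<noteq> snd q)"

definition zz2_inv :: "int \<times> bool \<Rightarrow> int \<times> bool" where
  "zz2_inv p = (- fst p, snd p)"

text \<open>D_infinity = < x, y | y^2, yxyx >, so x^a y = y x^(-a) and
  (y^b x^a)(y^d x^c) = y^(b+d) x^((-1)^d a + c).\<close>
definition dinf_mul :: "int \<times> bool \<Rightarrow> int \<times> bool \<Rightarrow> int \<times> bool" where
  "dinf_mul p q = ((if snd q then - fst p else fst p) + fst q, snd p \<noteq> snd q)"

definition dinf_inv :: "int \<times> bool \<Rightarrow> int \<times> bool" where
  "dinf_inv p = (if snd p then p else (- fst p, False))"

definition elemP :: "(int \<Rightarrow> real) \<Rightarrow> (int \<Rightarrow> real) \<Rightarrow> int \<times> bool \<Rightarrow> complex" where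
  "elemP \<alpha> \<beta> p = (if snd p then complex_of_real (\<beta> (fst p)) else complex_of_real (\<alpha> (fst p)))"

end

theory Submission
  imports Defs
begin

lemma gr_mult_alt:
  assumes fin: "finite S" and supp: "\<And>v. h v \<noteq> 0 \<Longrightarrow> v \<in> S"
    and div: "\<And>u v. mul u v = z \<longleftrightarrow> u = d v"
  shows "gr_mult mul f h z = (\<Sum>v\<in>S. f (d v) * h v)"
proof -
  have eq: "{(u,v). f u \<noteq> 0 \<and> h v \<noteq> 0 \<and> mul u v = z} = (\<lambda>v. (d v, v)) ` {v\<in>S. h v \<noteq> 0 \<and> f (d v) \<noteq> 0}"
    using div supp by auto
  have "gr_mult mul f h z = (\<Sum>v\<in>{v\<in>S. h v \<noteq> 0 \<and> f (d v) \<noteq> 0}. f (d v) * h v)"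
    unfolding gr_mult_def eq
    by (subst sum.reindex) (auto simp: inj_on_def)
  also have "\<dots> = (\<Sum>v\<in>S. f (d v) * h v)"
    by (rule sum.mono_neutral_left) (use fin in auto)
  finally show ?thesis .
qed

theorem corollary7p4:
  fixes \<alpha> \<beta> :: "int \<Rightarrow> real" and lam :: complex
  assumes "finite {k. \<alpha> k \<noteq> 0}" and "finite {k. \<beta> k \<noteq> 0}"
    and "reciprocal zz2_inv (elemP \<alpha> \<beta>)"
    and "norm lam * l1_norm (elemP \<alpha> \<beta>) < 1"
  shows "mG zz2_mul (0, False) (elemP \<alpha> \<beta>) lam = mG dinf_mul (0, False) (elemP \<alpha> \<beta>) lam"
proof -
  define P where "P = elemP \<alpha> \<beta>"
  define S where "S = {v. P v \<noteq> 0}"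
  have finS: "finite S"
  proof -
    have "S \<subseteq> ({k. \<alpha> k \<noteq> 0} \<times> {False}) \<union> ({k. \<beta> k \<noteq> 0} \<times> {True})"
      unfolding S_def P_def elemP_def by (auto split: if_splits)
    then show ?thesis using assms(1,2) by (meson finite_SigmaI finite_UnI finite_insert finite.emptyI finite_subset)
  qed
  have Psym: "P (- k, b) = P (k, b)" for k b
  proof -
    have "P (zz2_inv (k,b)) = cnj (P (k,b))" using assms(3) unfolding reciprocal_def P_def by blast
    moreover have "cnj (P (k,b)) = P (k,b)" unfolding P_def elemP_def by simp
    ultimately show ?thesis by (simp add: zz2_inv_def)
  qed
  define A where "A n = gr_pow zz2_mul (0,False) P n" for n
  define B where "B n = gr_pow dinf_mul (0,False) P n" for n
  have Astep: "A (Suc n) z = (\<Sum>v\<in>S. A n (fst z - fst v, snd z \<noteq> snd v) * P v)" for n z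
    unfolding A_def gr_pow.simps
    by (rule gr_mult_alt[OF finS]) (auto simp: S_def zz2_mul_def prod_eq_iff)
  have Bstep: "B (Suc n) z = (\<Sum>v\<in>S. B n (if snd v then -(fst z - fst v) else fst z - fst v, snd z \<noteq> snd v) * P v)" for n z
    unfolding B_def gr_pow.simps
    by (rule gr_mult_alt[OF finS]) (auto simp: S_def dinf_mul_def prod_eq_iff)
  have main: "B n = A n \<and> (\<forall>k b. A n (-k, b) = A n (k, b))" for n
  proof (induction n)
    case 0
    then show ?case by (auto simp: A_def B_def gr_unit_def)
  next
    case (Suc n)
    have sym: "A n (-k, b) = A n (k, b)" for k b using Suc by blast
    have e1: "B (Suc n) = A (Suc n)"
    proof
      fix z
      show "B (Suc n) z = A (Suc n) z"
        unfolding Bstep Astep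
      proof (intro sum.cong refl)
        fix v :: "int \<times> bool"
        show "B n (if snd v then -(fst z - fst v) else fst z - fst v, snd z \<noteq> snd v) * P v = A n (fst z - fst v, snd z \<noteq> snd v) * P v"
          using Suc sym[of "fst z - fst v" "snd z \<noteq> snd v"] by auto
      qed
    qed
    have e2: "A (Suc n) (-k, b) = A (Suc n) (k, b)" for k b
    proof -
      have "A (Suc n) (-k, b) = (\<Sum>v\<in>S. A n (- k - fst v, b \<noteq> snd v) * P v)"
        by (simp add: Astep)
      also have "\<dots> = (\<Sum>v\<in>S. A n (k - fst v, b \<noteq> snd v) * P v)"
      proof -
        have h1: "A n (k + a, c) * P (- a, d) = A n (- k - a, c) * P (a, d)" for a c d
          using sym[of "k + a" c] Psym[of a d] by simp
        have h2: "(- fst v, snd v) \<in> S" if "v \<in> S" for v using that Psym[of "fst v" "snd v"] by (simp add: S_def)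
        show ?thesis
          by (rule sum.reindex_bij_witness[where i="\<lambda>v. (- fst v, snd v)" and j="\<lambda>v. (- fst v, snd v)"])
             (use h1 h2 in auto)
      qed
      also have "\<dots> = A (Suc n) (k, b)" by (simp add: Astep)
      finally show ?thesis .
    qed
    show ?case using e1 e2 by blast
  qed
  have "gr_pow dinf_mul (0, False) (elemP \<alpha> \<beta>) m = gr_pow zz2_mul (0, False) (elemP \<alpha> \<beta>) m" for m
    using main[of m] unfolding A_def B_def P_def by blast
  then show ?thesis unfolding mG_def by presburger
qed

end
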